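(* Let $S$ be a $(2,\omega)$-divisible Cu-semigroup satisfying (O5), (O6) and (O7), and let $\iota\colon S_{\mathrm{soft}}\to S$ be the inclusion. Then the map $\iota^*\colon F(S)\to F(S_{\mathrm{soft}})$, $\lambda\mapsto\lambda\circ\iota$, is a homeomorphism.
   Context: A Cu-semigroup is a positively ordered commutative monoid satisfying (O1)–(O4): increasing sequences have suprema; each element is the supremum of a $\ll$-increasing sequence; $x'\ll x,y'\ll y\Rightarrow x'+y'\ll x+y$; suprema of increasing sequences are additive. $x\ll y$ means whenever $y\le\sup z_n$ for increasing $(z_n)$, $x\le z_m$ for some $m$. (O5): if $x+y\le z$, $x'\ll x$, $y'\ll y$ then some $c$ has $y'\ll c$ and $x'+c\le z\le x+c$. (O6): if $x'\ll x\le y+z$ then some $v,w$ have $v\le x,y$, $w\le x,z$, $x'\le v+w$. (O7): if $x'\ll x\le w$, $y'\ll y\le w$ then some $z$ has $x',y'\ll z\le w,x+y$. $\infty x=\sup_n nx$. $x$ is strongly soft if for every $x'\ll x$ there is $t$ with $x'+t\ll x$ and $x'\ll\infty t$; $S_{\mathrm{soft}}$ is the set of strongly soft elements, which under these hypotheses is a sub-Cu-semigroup satisfying (O5). $S$ is $(2,\omega)$-divisible if for $x'\ll x$ there is $y$ with $2y\le x$, $x'\le\infty y$. For a Cu-semigroup $T$ satisfying (O5), $F(T)$ is the set of monoid morphisms $T\to[0,\infty]$ preserving order and suprema of increasing sequences, equipped with its standard compact Hausdorff topology (the topology in which $\lambda_i\to\lambda$ iff $\limsup_i\lambda_i(x')\le\lambda(x)\le\liminf_i\lambda_i(x)$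 for all $x'\ll x$). *)

theory Defs
  imports "HOL-Analysis.Analysis" "HOL-Library.Extended_Nonnegative_Real" "HOL-Library.Liminf_Limsup"
begin

(* Everything is relative to a carrier T inside an ambient ordered commutative monoid 'a.
   For S itself we take T = UNIV; for S_soft we take T = soft_set. *)

definition is_lub :: "'a::order set \<Rightarrow> 'a \<Rightarrow> (nat \<Rightarrow> 'a) \<Rightarrow> bool" where
  "is_lub T s z \<longleftrightarrow> s \<in> T \<and> (\<forall>n. z n \<le> s) \<and> (\<forall>u\<in>T. (\<forall>n. z n \<le> u) \<longrightarrow> s \<le> u)"

definition way_below :: "'a::order set \<Rightarrow> 'a \<Rightarrow> 'a \<Rightarrow> bool" where
  "way_below T x y \<longleftrightarrow> (\<forall>z s. (\<forall>n. z n \<in> T) \<and> incseq z \<and> is_lub T s z \<and> y \<le> s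
       \<longrightarrow> (\<exists>m. x \<le> z m))"

definition nmul :: "nat \<Rightarrow> 'a::comm_monoid_add \<Rightarrow> 'a" where
  "nmul n x = (((+) x) ^^ n) 0"

definition le_infty :: "'a::{order,comm_monoid_add} set \<Rightarrow> 'a \<Rightarrow> 'a \<Rightarrow> bool" where
  "le_infty T x t \<longleftrightarrow> (\<exists>s. is_lub T s (\<lambda>n. nmul n t) \<and> x \<le> s)"

definition Cu_semigroup :: "'a::ordered_comm_monoid_add set \<Rightarrow> bool" where
  "Cu_semigroup T \<longleftrightarrow>
     0 \<in> T \<and> (\<forall>x\<in>T. \<forall>y\<in>T. x + y \<in> T) \<and> (\<forall>x\<in>T. 0 \<le> x)
   \<and> (\<forall>z. (\<forall>n. z n \<in> T) \<and> incseq z \<longrightarrow> (\<exists>s. is_lub T s z))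
   \<and> (\<forall>x\<in>T. \<exists>z. (\<forall>n. z n \<in> T) \<and> (\<forall>n. way_below T (z n) (z (Suc n))) \<and> is_lub T x z)
   \<and> (\<forall>x'\<in>T. \<forall>x\<in>T. \<forall>y'\<in>T. \<forall>y\<in>T. way_below T x' x \<and> way_below T y' y
         \<longrightarrow> way_below T (x' + y') (x + y))
   \<and> (\<forall>z w s t. (\<forall>n. z n \<in> T) \<and> (\<forall>n. w n \<in> T) \<and> incseq z \<and> incseq w
         \<and> is_lub T s z \<and> is_lub T t w \<longrightarrow> is_lub T (s + t) (\<lambda>n. z n + w n))"

definition O5 :: "'a::ordered_comm_monoid_add set \<Rightarrow> bool" where
  "O5 T \<longleftrightarrow> (\<forall>x\<in>T. \<forall>y\<in>T. \<forall>z\<in>T. \<forall>x'\<in>T. \<forall>y'\<in>T.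
     x + y \<le> z \<and> way_below T x' x \<and> way_below T y' y \<longrightarrow>
     (\<exists>c\<in>T. way_below T y' c \<and> x' + c \<le> z \<and> z \<le> x + c))"

definition O6 :: "'a::ordered_comm_monoid_add set \<Rightarrow> bool" where
  "O6 T \<longleftrightarrow> (\<forall>x'\<in>T. \<forall>x\<in>T. \<forall>y\<in>T. \<forall>z\<in>T.
     way_below T x' x \<and> x \<le> y + z \<longrightarrow>
     (\<exists>v\<in>T. \<exists>w\<in>T. v \<le> x \<and> v \<le> y \<and> w \<le> x \<and> w \<le> z \<and> x' \<le> v + w))"

definition O7 :: "'a::ordered_comm_monoid_add set \<Rightarrow> bool" where
  "O7 T \<longleftrightarrow> (\<forall>x'\<in>T. \<forall>x\<in>T. \<forall>y'\<in>T. \<forall>y\<in>T. \<forall>w\<in>T.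
     way_below T x' x \<and> x \<le> w \<and> way_below T y' y \<and> y \<le> w \<longrightarrow>
     (\<exists>z\<in>T. way_below T x' z \<and> way_below T y' z \<and> z \<le> w \<and> z \<le> x + y))"

definition two_omega_divisible :: "'a::ordered_comm_monoid_add set \<Rightarrow> bool" where
  "two_omega_divisible T \<longleftrightarrow> (\<forall>x'\<in>T. \<forall>x\<in>T. way_below T x' x \<longrightarrow>
     (\<exists>y\<in>T. y + y \<le> x \<and> le_infty T x' y))"

definition strongly_soft :: "'a::ordered_comm_monoid_add \<Rightarrow> bool" where
  "strongly_soft x \<longleftrightarrow> (\<forall>x'. way_below UNIV x' x \<longrightarrow>
     (\<exists>t. way_below UNIV (x' + t) x \<and> le_infty UNIV x' t))"

definition soft_set :: "'a::ordered_comm_monoid_add set" where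
  "soft_set = {x. strongly_soft x}"

(* functionals F(T); represented as functions vanishing off T *)
definition functionals :: "'a::ordered_comm_monoid_add set \<Rightarrow> ('a \<Rightarrow> ennreal) set" where
  "functionals T = {\<mu>. (\<forall>x. x \<notin> T \<longrightarrow> \<mu> x = 0) \<and> \<mu> 0 = 0
     \<and> (\<forall>x\<in>T. \<forall>y\<in>T. \<mu> (x + y) = \<mu> x + \<mu> y)
     \<and> (\<forall>x\<in>T. \<forall>y\<in>T. x \<le> y \<longrightarrow> \<mu> x \<le> \<mu> y)
     \<and> (\<forall>z s. (\<forall>n. z n \<in> T) \<and> incseq z \<and> is_lub T s z \<longrightarrow> \<mu> s = (SUP n. \<mu> (z n)))}"

definition F_conv :: "'a::ordered_comm_monoid_add set \<Rightarrow> ('a \<Rightarrow> ennreal) filter \<Rightarrow> ('a \<Rightarrow> ennreal) \<Rightarrow> bool" where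
  "F_conv T F \<mu> \<longleftrightarrow> (\<forall>x'\<in>T. \<forall>x\<in>T. way_below T x' x \<longrightarrow>
      Limsup F (\<lambda>\<nu>. \<nu> x') \<le> \<mu> x \<and> \<mu> x \<le> Liminf F (\<lambda>\<nu>. \<nu> x))"

(* the topology on F(T) whose convergent nets are exactly the F_conv ones *)
definition F_open :: "'a::ordered_comm_monoid_add set \<Rightarrow> ('a \<Rightarrow> ennreal) set \<Rightarrow> bool" where
  "F_open T U \<longleftrightarrow> U \<subseteq> functionals T \<and>
     (\<forall>\<mu>\<in>U. \<forall>F. eventually (\<lambda>\<nu>. \<nu> \<in> functionals T) F \<and> F_conv T F \<mu>
        \<longrightarrow> eventually (\<lambda>\<nu>. \<nu> \<in> U) F)"

lemma F_open_Int: "F_open T S \<Longrightarrow> F_open T U \<Longrightarrow> F_open T (S \<inter> U)"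
  unfolding F_open_def by (auto simp: eventually_conj_iff)

lemma F_open_Union: "(\<And>S. S \<in> K \<Longrightarrow> F_open T S) \<Longrightarrow> F_open T (\<Union>K)"
  unfolding F_open_def
  by (smt (verit, ccfv_SIG) UnionE UnionI Union_least eventually_mono)

lemma istopology_F_open: "istopology (F_open T)"
  unfolding istopology_def using F_open_Int F_open_Union by blast

definition F_topology :: "'a::ordered_comm_monoid_add set \<Rightarrow> ('a \<Rightarrow> ennreal) topology" where
  "F_topology T = topology (F_open T)"

end

theory Submission
  imports Defs
begin


lemma is_lub_unique: "is_lub T s z \<Longrightarrow> is_lub T s' z \<Longrightarrow> (s::'a::order) = s'"
  unfolding is_lub_def by (meson antisym)

lemma nmul_0[simp]: "nmul 0 x = 0" by (simp add: nmul_def)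
lemma nmul_Suc[simp]: "nmul (Suc n) x = x + nmul n x" by (simp add: nmul_def)

lemma nmul_add: "nmul (m + n) x = nmul m x + nmul n x"
  by (induction m) (auto simp: add.assoc)

lemma nmul_distrib: "nmul n (x + y) = nmul n x + nmul n (y::'a::comm_monoid_add)"
  by (induction n) (auto simp: algebra_simps)

lemma nmul_mult: "nmul (m * n) x = nmul m (nmul n x)"
  by (induction m) (auto simp: nmul_add nmul_distrib)

lemma nmul_1[simp]: "nmul 1 x = x" by simp

lemma nmul_mono: "x \<le> y \<Longrightarrow> nmul n x \<le> nmul n (y::'a::ordered_comm_monoid_add)"
  by (induction n) (auto intro: add_mono)

locale CuS =
  fixes S_ty :: "'a::ordered_comm_monoid_add itself"
  assumes cu: "Cu_semigroup (UNIV :: 'a set)"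
    and o5: "O5 (UNIV :: 'a set)" and o6: "O6 (UNIV :: 'a set)" and o7: "O7 (UNIV :: 'a set)"
    and dv: "two_omega_divisible (UNIV :: 'a set)"
begin

abbreviation wb :: "'a \<Rightarrow> 'a \<Rightarrow> bool" where "wb \<equiv> way_below UNIV"
abbreviation lub :: "'a \<Rightarrow> (nat \<Rightarrow> 'a) \<Rightarrow> bool" where "lub \<equiv> is_lub UNIV"

lemma pos: "0 \<le> (x::'a)" using cu unfolding Cu_semigroup_def by auto

lemma O1: "incseq (z::nat \<Rightarrow> 'a) \<Longrightarrow> \<exists>s. lub s z"
  using cu unfolding Cu_semigroup_def by auto

lemma O2: "\<exists>z. (\<forall>n. wb (z n) (z (Suc n))) \<and> lub (x::'a) z"
  using cu unfolding Cu_semigroup_def by auto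

lemma O3: "wb (a::'a) b \<Longrightarrow> wb c d \<Longrightarrow> wb (a + c) (b + d)"
  using cu unfolding Cu_semigroup_def by auto

lemma O4: "incseq (z::nat \<Rightarrow> 'a) \<Longrightarrow> incseq w \<Longrightarrow> lub s z \<Longrightarrow> lub t w \<Longrightarrow> lub (s + t) (\<lambda>n. z n + w n)"
  using cu unfolding Cu_semigroup_def by blast

lemma lub_upper: "lub s z \<Longrightarrow> z n \<le> s" unfolding is_lub_def by auto
lemma lub_least: "lub s z \<Longrightarrow> (\<And>n. z n \<le> u) \<Longrightarrow> s \<le> u" unfolding is_lub_def by auto

lemma wbD: "wb a b \<Longrightarrow> incseq z \<Longrightarrow> lub s z \<Longrightarrow> b \<le> s \<Longrightarrow> \<exists>m. a \<le> z m"
  unfolding way_below_def by blast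

lemma wb_le: "wb (a::'a) b \<Longrightarrow> a \<le> b"
proof -
  assume "wb a b"
  moreover have "lub b (\<lambda>_. b)" unfolding is_lub_def by auto
  ultimately show ?thesis using wbD[of a b "\<lambda>_. b" b] by (auto simp: incseq_def)
qed

lemma wb_mono: "(a::'a) \<le> a' \<Longrightarrow> wb a' b \<Longrightarrow> b \<le> b' \<Longrightarrow> wb a b'"
  unfolding way_below_def by (meson order_trans)

lemma wb_le_trans: "wb (a::'a) b \<Longrightarrow> b \<le> c \<Longrightarrow> wb a c" using wb_mono by blast
lemma le_wb_trans: "(a::'a) \<le> b \<Longrightarrow> wb b c \<Longrightarrow> wb a c" using wb_mono by blast

lemma zero_wb: "wb 0 (x::'a)"
  unfolding way_below_def using pos by blast

lemma wbseq_inc: "(\<forall>n. wb (z n) (z (Suc n))) \<Longrightarrow> incseq (z::nat \<Rightarrow> 'a)"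
  by (rule incseq_SucI) (simp add: wb_le)

lemma wbseq_wb: "(\<forall>n. wb (z n) (z (Suc n))) \<Longrightarrow> lub x z \<Longrightarrow> wb (z n) (x::'a)"
  by (meson lub_upper wb_le_trans)

lemma interp: "wb (a::'a) b \<Longrightarrow> \<exists>c. wb a c \<and> wb c b"
proof -
  assume ab: "wb a b"
  obtain z where z: "\<forall>n. wb (z n) (z (Suc n))" "lub b z" using O2 by blast
  then obtain m where "a \<le> z m" using wbD[OF ab wbseq_inc[OF z(1)] z(2)] by auto
  then have "wb a (z (Suc m))" using z(1) le_wb_trans by blast
  moreover have "wb (z (Suc m)) b" using wbseq_wb[OF z] .
  ultimately show ?thesis by blast
qed

lemma nmul_mono_n: "m \<le> n \<Longrightarrow> nmul m x \<le> nmul n (x::'a)"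
proof -
  assume "m \<le> n"
  then obtain k where "n = k + m" by (metis le_add_diff_inverse2)
  then have "nmul n x = nmul k x + nmul m x" by (simp add: nmul_add)
  moreover have "0 + nmul m x \<le> nmul k x + nmul m x" by (rule add_right_mono) (rule pos)
  ultimately show ?thesis by simp
qed

lemma le_add_pos: "(x::'a) \<le> x + y"
  using add_left_mono[OF pos[of y], of x] by simp

lemma le_add_pos2: "(x::'a) \<le> y + x"
  using le_add_pos by (simp add: add.commute)

lemma nmul_incseq: "incseq (\<lambda>n. nmul n (x::'a))"
  by (simp add: incseq_def nmul_mono_n)

lemma wb_nmul: "wb (a::'a) b \<Longrightarrow> wb (nmul n a) (nmul n b)"
  by (induction n) (auto intro: O3 zero_wb)

lemma incseq_nmul_comp: "incseq (z::nat \<Rightarrow> 'a) \<Longrightarrow> incseq (\<lambda>k. nmul n (z k))"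
  by (simp add: incseq_def nmul_mono)

lemma lub_nmul: "incseq (z::nat \<Rightarrow> 'a) \<Longrightarrow> lub s z \<Longrightarrow> lub (nmul n s) (\<lambda>k. nmul n (z k))"
proof (induction n)
  case 0
  then show ?case by (simp add: is_lub_def)
next
  case (Suc n)
  then show ?case using O4[OF Suc.prems(1) incseq_nmul_comp[OF Suc.prems(1)] Suc.prems(2) Suc.IH[OF Suc.prems]]
    by simp
qed

definition infm :: "'a \<Rightarrow> 'a" where "infm y = (SOME s. lub s (\<lambda>n. nmul n y))"

lemma infm_lub: "lub (infm y) (\<lambda>n. nmul n y)"
  unfolding infm_def using O1[OF nmul_incseq] by (rule someI_ex)

lemma le_infty_iff: "le_infty UNIV x y \<longleftrightarrow> x \<le> infm y"
  unfolding le_infty_def using infm_lub is_lub_unique by blast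

lemma nmul_le_infm: "nmul k y \<le> infm y"
  using infm_lub lub_upper by blast

lemma le_infm: "y \<le> infm y" using nmul_le_infm[of 1 y] by simp

lemma nmul_infm: "nmul k (infm y) \<le> infm y"
proof -
  have "lub (nmul k (infm y)) (\<lambda>n. nmul k (nmul n y))"
    using lub_nmul[OF nmul_incseq infm_lub] .
  moreover have "nmul k (nmul n y) \<le> infm y" for n
    by (metis nmul_mult nmul_le_infm)
  ultimately show ?thesis using lub_least by blast
qed

lemma le_infm_nmul: "x \<le> infm y \<Longrightarrow> nmul k x \<le> infm y"
  by (meson nmul_infm nmul_mono order_trans)

lemma le_infm_add: "a \<le> infm y \<Longrightarrow> b \<le> infm y \<Longrightarrow> a + b \<le> infm y"
  using le_infm_nmul[of "a + b" y 2] add_mono[of a "infm y" b "infm y"] nmul_infm[of 2 y]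
  by (simp add: numeral_2_eq_2)

lemma infm_mono: "x \<le> y \<Longrightarrow> infm x \<le> infm y"
proof -
  assume "x \<le> y"
  then have "nmul n x \<le> infm y" for n by (meson nmul_le_infm nmul_mono order_trans)
  then show ?thesis using infm_lub lub_least by blast
qed

lemma infm_trans: "x \<le> infm y \<Longrightarrow> y \<le> infm z \<Longrightarrow> x \<le> infm z"
proof -
  assume a: "x \<le> infm y" and b: "y \<le> infm z"
  have "nmul n y \<le> infm z" for n using le_infm_nmul[OF b] .
  then have "infm y \<le> infm z" using infm_lub lub_least by blast
  then show ?thesis using a by simp
qed

lemma W1: "wb p (nmul k u) \<Longrightarrow> \<exists>u'. wb u' u \<and> p \<le> nmul k (u'::'a)"
proof -
  assume pk: "wb p (nmul k u)"
  obtain z where z: "\<forall>n. wb (z n) (z (Suc n))" "lub u z" using O2 by blast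
  have inc: "incseq z" using wbseq_inc[OF z(1)] .
  have "lub (nmul k u) (\<lambda>j. nmul k (z j))" using lub_nmul[OF inc z(2)] .
  then obtain m where "p \<le> nmul k (z m)"
    using wbD[OF pk incseq_nmul_comp[OF inc]] by blast
  moreover have "wb (z m) u" using wbseq_wb[OF z] .
  ultimately show ?thesis by blast
qed

lemma W2: "wb p (infm u) \<Longrightarrow> \<exists>k. p \<le> nmul k (u::'a)"
  using wbD[OF _ nmul_incseq infm_lub] by blast

lemma W3: "wb p (infm u) \<Longrightarrow> \<exists>k u'. wb u' u \<and> p \<le> nmul k (u'::'a)"
proof -
  assume "wb p (infm u)"
  then obtain p2 where "wb p p2" "wb p2 (infm u)" using interp by blast
  then obtain k where "p2 \<le> nmul k u" using W2 by blast
  then have "wb p (nmul k u)" using \<open>wb p p2\<close> wb_le_trans by blast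
  then show ?thesis using W1 by blast
qed

lemma W5: "wb p (q + r) \<Longrightarrow> \<exists>q' r'. wb q' q \<and> wb r' r \<and> p \<le> q' + (r'::'a)"
proof -
  assume pqr: "wb p (q + r)"
  obtain z where z: "\<forall>n. wb (z n) (z (Suc n))" "lub q z" using O2 by blast
  obtain w where w: "\<forall>n. wb (w n) (w (Suc n))" "lub r w" using O2 by blast
  have iz: "incseq z" and iw: "incseq w" using wbseq_inc z w by auto
  have "lub (q + r) (\<lambda>n. z n + w n)" using O4[OF iz iw z(2) w(2)] .
  moreover have "incseq (\<lambda>n. z n + w n)" using iz iw by (simp add: incseq_def add_mono)
  ultimately obtain m where "p \<le> z m + w m" using wbD[OF pqr] by blast
  then show ?thesis using wbseq_wb[OF z] wbseq_wb[OF w] by blast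
qed

lemma W4: "wb p (q + nmul m r) \<Longrightarrow> \<exists>q' r'. wb q' q \<and> wb r' r \<and> p \<le> q' + nmul m (r'::'a)"
proof -
  assume "wb p (q + nmul m r)"
  then obtain q' R' where a: "wb q' q" "wb R' (nmul m r)" "p \<le> q' + R'" using W5 by blast
  then obtain r' where "wb r' r" "R' \<le> nmul m r'" using W1 by blast
  then show ?thesis using a by (meson add_left_mono order_trans)
qed

lemma O5': "x + y \<le> z \<Longrightarrow> wb x' x \<Longrightarrow> wb y' y \<Longrightarrow> \<exists>c. wb y' c \<and> x' + c \<le> z \<and> z \<le> x + (c::'a)"
  using o5 unfolding O5_def by blast

lemma O6': "wb x' x \<Longrightarrow> x \<le> y + z \<Longrightarrow> \<exists>v w. v \<le> x \<and> v \<le> y \<and> w \<le> x \<and> w \<le> z \<and> x' \<le> v + (w::'a)"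
  using o6 unfolding O6_def by blast

lemma O7': "wb x' x \<Longrightarrow> x \<le> w \<Longrightarrow> wb y' y \<Longrightarrow> y \<le> w \<Longrightarrow> \<exists>z. wb x' z \<and> wb y' z \<and> z \<le> w \<and> z \<le> x + (y::'a)"
  using o7 unfolding O7_def by blast

lemma div': "wb x' x \<Longrightarrow> \<exists>y. y + y \<le> x \<and> x' \<le> infm (y::'a)"
  using dv unfolding two_omega_divisible_def le_infty_iff by blast

lemma soft_iff: "strongly_soft (x::'a) \<longleftrightarrow> (\<forall>x'. wb x' x \<longrightarrow> (\<exists>t. wb (x' + t) x \<and> x' \<le> infm t))"
  unfolding strongly_soft_def le_infty_iff ..

end

context CuS begin

lemma step_ex:
  assumes pq: "wb p (infm q)"
  shows "\<exists>p' q' t. p' = p + t \<and> (\<exists>K. p \<le> nmul K t) \<and> p' + q' \<le> p + q \<and> wb p' (infm (q'::'a))"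
proof -
  obtain k q1 where q1: "wb q1 q" "p \<le> nmul k q1" using W3[OF pq] by blast
  obtain q2 where q2: "wb q1 q2" "wb q2 q" using interp[OF q1(1)] by blast
  obtain y where y: "y + y \<le> q" "q2 \<le> infm y" using div'[OF q2(2)] by blast
  have "wb q1 (infm y)" using q2(1) y(2) wb_le_trans by blast
  then obtain j y1 where y1: "wb y1 y" "q1 \<le> nmul j y1" using W3 by blast
  have pK: "p \<le> nmul (k*j) y1"
    using q1(2) nmul_mono[OF y1(2), of k] by (simp add: nmul_mult)
  have "y1 + y \<le> y + y" using wb_le[OF y1(1)] by (rule add_right_mono)
  then have "y1 + y \<le> q" using y(1) by simp
  then have A: "p + y1 + y \<le> p + q" by (simp add: add.assoc add_left_mono)
  have "p + y1 \<le> nmul (k*j) y1 + y1" using pK by (rule add_right_mono)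
  also have "\<dots> = nmul (Suc (k*j)) y1" by (simp add: add.commute)
  finally have B1: "p + y1 \<le> nmul (Suc (k*j)) y1" .
  have "wb (nmul (Suc (k*j)) y1) (nmul (Suc (k*j)) y)" using wb_nmul[OF y1(1)] .
  then have "wb (p + y1) (infm y)"
    using B1 nmul_le_infm wb_mono by blast
  then show ?thesis using A pK by blast
qed

lemma SC:
  assumes X: "x0 + u0 \<le> X" and w0: "wb x0 (infm u0)"
  shows "\<exists>s. strongly_soft s \<and> x0 \<le> s \<and> s \<le> (X::'a)"
proof -
  define C where "C = (\<lambda>(st::'a\<times>'a) (r::('a\<times>'a)\<times>'a).
     fst (fst r) = fst st + snd r \<and> (\<exists>K. fst st \<le> nmul K (snd r))
     \<and> fst (fst r) + snd (fst r) \<le> fst st + snd st \<and> wb (fst (fst r)) (infm (snd (fst r))))"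
  have "\<forall>st. \<exists>r. wb (fst st) (infm (snd st)) \<longrightarrow> C st r"
  proof
    fix st :: "'a\<times>'a"
    show "\<exists>r. wb (fst st) (infm (snd st)) \<longrightarrow> C st r"
    proof (cases "wb (fst st) (infm (snd st))")
      case True
      then obtain p' q' t where "p' = fst st + t" "\<exists>K. fst st \<le> nmul K t"
          "p' + q' \<le> fst st + snd st" "wb p' (infm q')" using step_ex by blast
      then have "C st ((p',q'),t)" unfolding C_def by auto
      then show ?thesis by blast
    qed auto
  qed
  then obtain F where F: "\<forall>st. wb (fst st) (infm (snd st)) \<longrightarrow> C st (F st)"
    using choice[of "\<lambda>st r. wb (fst st) (infm (snd st)) \<longrightarrow> C st r"] by blast
  define st where "st n = ((\<lambda>s. fst (F s)) ^^ n) (x0,u0)" for n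
  have st0: "st 0 = (x0,u0)" and stS: "st (Suc n) = fst (F (st n))" for n
    by (auto simp: st_def)
  have inv: "wb (fst (st n)) (infm (snd (st n))) \<and> fst (st n) + snd (st n) \<le> X" for n
  proof (induction n)
    case 0 then show ?case using X w0 by (simp add: st0)
  next
    case (Suc n)
    then have "C (st n) (F (st n))" using F by blast
    then show ?case using Suc unfolding C_def stS by (auto intro: order_trans)
  qed
  define p where "p n = fst (st n)" for n
  define t where "t n = snd (F (st n))" for n
  have Cn: "C (st n) (F (st n))" for n using F inv by blast
  have pS: "p (Suc n) = p n + t n" for n using Cn[of n] unfolding C_def p_def t_def stS by auto
  have pK: "\<exists>K. p n \<le> nmul K (t n)" for n using Cn[of n] unfolding C_def p_def t_def by auto
  have pX: "p n \<le> X" for n using inv[of n] le_add_pos unfolding p_def by (meson order_trans)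
  have inc: "incseq p" by (rule incseq_SucI) (simp add: pS le_add_pos)
  obtain s where s: "lub s p" using O1[OF inc] by blast
  have sX: "s \<le> X" using lub_least[OF s pX] .
  have x0s: "x0 \<le> s" using lub_upper[OF s, of 0] by (simp add: p_def st0)
  have "strongly_soft s"
    unfolding soft_iff
  proof (intro allI impI)
    fix z assume zs: "wb z s"
    obtain z2 where z2: "wb z z2" "wb z2 s" using interp[OF zs] by blast
    obtain k where "z2 \<le> p k" using wbD[OF z2(2) inc s] by auto
    then have zk: "wb z (p k)" using z2(1) wb_le_trans by blast
    obtain K where "p k \<le> nmul K (t k)" using pK by blast
    then have "wb z (nmul K (t k))" using zk wb_le_trans by blast
    then obtain t' where t': "wb t' (t k)" "z \<le> nmul K t'" using W1 by blast
    have "wb (z + t') (p k + t k)" using O3[OF zk t'(1)] .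
    then have "wb (z + t') s" using lub_upper[OF s, of "Suc k"] pS wb_le_trans by auto
    moreover have "z \<le> infm t'" using t'(2) nmul_le_infm order_trans by blast
    ultimately show "\<exists>t. wb (z + t) s \<and> z \<le> infm t" by blast
  qed
  then show ?thesis using sX x0s by blast
qed

lemma Div: "wb x' x \<Longrightarrow> \<exists>y. nmul (2^m) y \<le> x \<and> x' \<le> infm (y::'a)"
proof (induction m arbitrary: x')
  case 0
  then show ?case using wb_le le_infm order_trans by fastforce
next
  case (Suc m)
  obtain x'' where x'': "wb x' x''" "wb x'' x" using interp[OF Suc.prems] by blast
  obtain y where y: "nmul (2^m) y \<le> x" "x'' \<le> infm y" using Suc.IH[OF x''(2)] by blast
  have "wb x' (infm y)" using x''(1) y(2) wb_le_trans by blast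
  then obtain k y1 where y1: "wb y1 y" "x' \<le> nmul k y1" using W3 by blast
  obtain z where z: "z + z \<le> y" "y1 \<le> infm z" using div'[OF y1(1)] by blast
  have "x' \<le> infm z" using y1(2) le_infm_nmul[OF z(2)] order_trans by blast
  moreover have "nmul (2^Suc m) z \<le> x"
  proof -
    have "nmul (2^Suc m) z = nmul (2^m) (nmul 2 z)" by (simp add: nmul_mult[symmetric] mult.commute)
    also have "nmul 2 z = z + z" by (simp add: numeral_2_eq_2)
    finally have "nmul (2^Suc m) z = nmul (2^m) (z + z)" .
    also have "\<dots> \<le> nmul (2^m) y" using nmul_mono[OF z(1)] .
    finally show ?thesis using y(1) by simp
  qed
  ultimately show ?case by blast
qed

lemma K:
  assumes xx: "wb x' x"
  shows "\<exists>s. strongly_soft s \<and> s \<le> x \<and> nmul n x' \<le> nmul (Suc n) (s::'a)"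
proof -
  obtain a1 where a1: "wb x' a1" "wb a1 x" using interp[OF xx] by blast
  obtain a2 where a2: "wb a1 a2" "wb a2 x" using interp[OF a1(2)] by blast
  obtain a where a: "wb a2 a" "wb a x" using interp[OF a2(2)] by blast
  obtain b where b: "wb a b" "wb b x" using interp[OF a(2)] by blast
  obtain b' where b': "wb b b'" "wb b' x" using interp[OF b(2)] by blast
  obtain u where u: "nmul (2^Suc n) u \<le> x" "b' \<le> infm u" using Div[OF b'(2)] by blast
  have "Suc n \<le> 2^Suc n" using less_exp[of "Suc n"] by simp
  then have uu: "nmul (Suc n) u \<le> x" using nmul_mono_n u(1) order_trans by blast
  have "wb b (infm u)" using b'(1) u(2) wb_le_trans by blast
  then obtain k u1 where u1: "wb u1 u" "b \<le> nmul k u1" using W3 by blast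
  obtain u2 where u2: "wb u1 u2" "wb u2 u" using interp[OF u1(1)] by blast
  obtain u3 where u3: "wb u2 u3" "wb u3 u" using interp[OF u2(2)] by blast
  have "u3 + nmul n u \<le> u + nmul n u" using wb_le[OF u3(2)] by (rule add_right_mono)
  then have "u3 + nmul n u \<le> x" using uu by simp
  then obtain c where c: "wb (nmul n u3) c" "u2 + c \<le> x" "x \<le> u3 + c"
    using O5'[OF _ u3(1) wb_nmul[OF u3(2)]] by blast
  have ax: "a \<le> u3 + c" using wb_le[OF a(2)] c(3) by simp
  obtain v w where vw: "v \<le> a" "v \<le> u3" "w \<le> a" "w \<le> c" "a2 \<le> v + w"
    using O6'[OF a(1) ax] by blast
  have "nmul n a2 \<le> nmul n v + nmul n w" using nmul_mono[OF vw(5)] by (simp add: nmul_distrib)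
  also have "\<dots> \<le> nmul n u3 + nmul n w" using nmul_mono[OF vw(2)] by (rule add_right_mono)
  also have "\<dots> \<le> c + nmul n w" using wb_le[OF c(1)] by (rule add_right_mono)
  finally have h1: "nmul n a2 \<le> c + nmul n w" .
  obtain v' w' where vw': "v' \<le> nmul n a2" "v' \<le> c" "w' \<le> nmul n a2" "w' \<le> nmul n w"
      "nmul n a1 \<le> v' + w'"
    using O6'[OF wb_nmul[OF a2(1)] h1] by blast
  have "nmul n a1 \<le> v' + nmul n w" using vw'(5) add_left_mono[OF vw'(4)] order_trans by blast
  then have "wb (nmul n x') (v' + nmul n w)" using wb_nmul[OF a1(1)] wb_le_trans by blast
  then obtain v0 w0 where vw0: "wb v0 v'" "wb w0 w" "nmul n x' \<le> v0 + nmul n w0"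
    using W4 by blast
  obtain z where z: "wb v0 z" "wb w0 z" "z \<le> c" "z \<le> v' + w"
    using O7'[OF vw0(1) vw'(2) vw0(2) vw(4)] by blast
  have "v0 + nmul n w0 \<le> z + nmul n z"
    using add_mono[OF wb_le[OF z(1)] nmul_mono[OF wb_le[OF z(2)]]] .
  then have zx': "nmul n x' \<le> nmul (Suc n) z" using vw0(3) by simp
  have "v' + w \<le> nmul n a + a"
    using add_mono[OF order_trans[OF vw'(1) nmul_mono[OF wb_le[OF a(1)]]] vw(3)] .
  then have za: "z \<le> nmul (Suc n) a" using z(4) by (simp add: add.commute)
  have "nmul (Suc n) b \<le> nmul (Suc n) (nmul k u1)" using nmul_mono[OF u1(2)] .
  also have "\<dots> \<le> infm u1" by (simp only: nmul_mult[symmetric] nmul_le_infm)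
  finally have "wb (nmul (Suc n) a) (infm u1)" using wb_nmul[OF b(1)] wb_le_trans by blast
  then have zu1: "wb z (infm u1)" using za le_wb_trans by blast
  have "z + u1 \<le> c + u2" using add_mono[OF z(3) wb_le[OF u2(1)]] .
  then have "z + u1 \<le> x" using c(2) by (simp add: add.commute)
  then obtain s where s: "strongly_soft s" "z \<le> s" "s \<le> x" using SC[OF _ zu1] by blast
  have "nmul n x' \<le> nmul (Suc n) s" using zx' nmul_mono[OF s(2)] order_trans by blast
  then show ?thesis using s by blast
qed

lemma SQ:
  assumes s: "strongly_soft s" and s's: "wb s' s"
  shows "\<exists>q. strongly_soft q \<and> s' \<le> q \<and> wb q (s::'a)"
proof -
  obtain s'' where s'': "wb s' s''" "wb s'' s" using interp[OF s's] by blast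
  obtain t where t: "wb (s'' + t) s" "s'' \<le> infm t" using s s''(2) unfolding soft_iff by blast
  have w0: "wb s' (infm t)" using s''(1) t(2) wb_le_trans by blast
  have "s' + t \<le> s'' + t" using wb_le[OF s''(1)] by (rule add_right_mono)
  then obtain q where q: "strongly_soft q" "s' \<le> q" "q \<le> s'' + t" using SC[OF _ w0] by blast
  then show ?thesis using t(1) le_wb_trans by blast
qed

lemma SEQ:
  assumes s: "strongly_soft (s::'a)"
  shows "\<exists>q. (\<forall>k. strongly_soft (q k)) \<and> incseq q \<and> (\<forall>k. wb (q k) s) \<and> lub s q"
proof -
  obtain z where z: "\<forall>n. wb (z n) (z (Suc n))" "lub s z" using O2 by blast
  have iz: "incseq z" using wbseq_inc[OF z(1)] .
  have "\<forall>rk. \<exists>q'. wb (fst rk) s \<longrightarrow> (strongly_soft q' \<and> wb q' s \<and> fst rk \<le> q' \<and> z (snd rk) \<le> q')"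
  proof
    fix rk :: "'a \<times> nat"
    show "\<exists>q'. wb (fst rk) s \<longrightarrow> (strongly_soft q' \<and> wb q' s \<and> fst rk \<le> q' \<and> z (snd rk) \<le> q')"
    proof (cases "wb (fst rk) s")
      case True
      then obtain m where m: "fst rk \<le> z m" using wbD[OF _ iz z(2)] by blast
      define j where "j = max m (snd rk)"
      have "fst rk \<le> z j" "z (snd rk) \<le> z j" using m iz unfolding j_def incseq_def
        by (auto intro: order_trans)
      moreover obtain q' where "strongly_soft q'" "z j \<le> q'" "wb q' s"
        using SQ[OF s wbseq_wb[OF z]] by blast
      ultimately show ?thesis by (meson order_trans)
    qed auto
  qed
  then obtain G where G: "\<forall>rk. wb (fst rk) s \<longrightarrow> (strongly_soft (G rk) \<and> wb (G rk) s \<and> fst rk \<le> G rk \<and> z (snd rk) \<le> G rk)"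
    using choice[of "\<lambda>rk q'. wb (fst rk) s \<longrightarrow> (strongly_soft q' \<and> wb q' s \<and> fst rk \<le> q' \<and> z (snd rk) \<le> q')"]
    by blast
  define q where "q = rec_nat (G (0, 0)) (\<lambda>k r. G (r, Suc k))"
  have q0: "q 0 = G (0,0)" and qS: "q (Suc k) = G (q k, Suc k)" for k by (simp_all add: q_def)
  have inv: "strongly_soft (q k) \<and> wb (q k) s \<and> z k \<le> q k" for k
  proof (induction k)
    case 0 then show ?case using G zero_wb[of s] by (simp add: q0)
  next
    case (Suc k) then show ?case using G[rule_format, of "(q k, Suc k)"] by (simp add: qS)
  qed
  have inc: "incseq q"
    by (rule incseq_SucI) (use G inv in \<open>simp add: qS\<close>)
  have "lub s q"
    unfolding is_lub_def using inv wb_le lub_least[OF z(2)] by (meson UNIV_I order_trans)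
  then show ?thesis using inv inc by blast
qed

lemma soft0: "strongly_soft (0::'a)"
  unfolding soft_iff by (metis add.right_neutral order_trans pos wb_le)

lemma soft_add:
  assumes a: "strongly_soft (a::'a)" and b: "strongly_soft b"
  shows "strongly_soft (a + b)"
  unfolding soft_iff
proof (intro allI impI)
  fix x' assume "wb x' (a + b)"
  then obtain a' b' where ab: "wb a' a" "wb b' b" "x' \<le> a' + b'" using W5 by blast
  obtain t1 where t1: "wb (a' + t1) a" "a' \<le> infm t1" using a ab(1) unfolding soft_iff by blast
  obtain t2 where t2: "wb (b' + t2) b" "b' \<le> infm t2" using b ab(2) unfolding soft_iff by blast
  have "x' + (t1 + t2) \<le> (a' + t1) + (b' + t2)" using add_right_mono[OF ab(3), of "t1+t2"]
    by (simp add: ac_simps)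
  then have "wb (x' + (t1 + t2)) (a + b)" using O3[OF t1(1) t2(1)] le_wb_trans by blast
  moreover have "a' \<le> infm (t1 + t2)" using t1(2) infm_mono[OF le_add_pos] order_trans by blast
  moreover have "b' \<le> infm (t1 + t2)" using t2(2) infm_mono[OF le_add_pos2] order_trans by blast
  ultimately show "\<exists>t. wb (x' + t) (a + b) \<and> x' \<le> infm t"
    using ab(3) le_infm_add order_trans by blast
qed

lemma soft_nmul: "strongly_soft (a::'a) \<Longrightarrow> strongly_soft (nmul n a)"
  by (induction n) (auto intro: soft_add soft0)

lemma soft_lub:
  assumes inc: "incseq (z::nat \<Rightarrow> 'a)" and sz: "\<forall>n. strongly_soft (z n)" and s: "lub s z"
  shows "strongly_soft s"
  unfolding soft_iff
proof (intro allI impI)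
  fix x' assume "wb x' s"
  then obtain x'' where x'': "wb x' x''" "wb x'' s" using interp by blast
  obtain m where "x'' \<le> z m" using wbD[OF x''(2) inc s] by auto
  then have "wb x' (z m)" using x''(1) wb_le_trans by blast
  then obtain t where "wb (x' + t) (z m)" "x' \<le> infm t" using sz unfolding soft_iff by blast
  then show "\<exists>t. wb (x' + t) s \<and> x' \<le> infm t" using lub_upper[OF s] wb_le_trans by blast
qed

lemma lub_soft_iff:
  assumes inc: "incseq (z::nat \<Rightarrow> 'a)" and sz: "\<forall>n. z n \<in> soft_set"
  shows "is_lub soft_set s z \<longleftrightarrow> lub s z"
proof
  assume a: "is_lub soft_set s z"
  obtain L where L: "lub L z" using O1[OF inc] by blast
  have Ls: "L \<in> soft_set" using soft_lub[OF inc _ L] sz by (simp add: soft_set_def)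
  have "s \<le> L" using a Ls L unfolding is_lub_def by auto
  moreover have "L \<le> s" using a L unfolding is_lub_def by auto
  ultimately show "lub s z" using L by (metis antisym)
next
  assume a: "lub s z"
  then have "s \<in> soft_set" using soft_lub[OF inc _ a] sz by (simp add: soft_set_def)
  then show "is_lub soft_set s z" using a unfolding is_lub_def by auto
qed

lemma wb_soft_iff:
  assumes a: "strongly_soft (a::'a)" and b: "strongly_soft b"
  shows "way_below soft_set a b \<longleftrightarrow> wb a b"
proof
  assume ab: "way_below soft_set a b"
  obtain q where q: "\<forall>k. strongly_soft (q k)" "incseq q" "\<forall>k. wb (q k) b" "lub b q"
    using SEQ[OF b] by blast
  have "is_lub soft_set b q" using lub_soft_iff[OF q(2)] q(1,4) by (simp add: soft_set_def)
  then obtain m where "a \<le> q m" using ab q(1,2) unfolding way_below_def soft_set_def by blast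
  then show "wb a b" using q(3) le_wb_trans by blast
next
  assume ab: "wb a b"
  show "way_below soft_set a b"
    unfolding way_below_def
  proof (intro allI impI)
    fix z s assume h: "(\<forall>n. z n \<in> soft_set) \<and> incseq z \<and> is_lub soft_set s z \<and> b \<le> s"
    then have "lub s z" using lub_soft_iff by blast
    then show "\<exists>m. a \<le> z m" using wbD[OF ab] h by blast
  qed
qed

lemma K':
  assumes xx: "wb x' x"
  shows "\<exists>s' s. strongly_soft s' \<and> strongly_soft s \<and> wb s' s \<and> s \<le> x \<and> nmul n x' \<le> nmul (Suc n) (s'::'a)"
proof -
  obtain x'' where x'': "wb x' x''" "wb x'' x" using interp[OF xx] by blast
  obtain s where s: "strongly_soft s" "s \<le> x" "nmul n x'' \<le> nmul (Suc n) s" using K[OF x''(2)] by blast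
  have w: "wb (nmul n x') (nmul (Suc n) s)" using wb_nmul[OF x''(1)] s(3) wb_le_trans by blast
  obtain q where q: "\<forall>k. strongly_soft (q k)" "incseq q" "\<forall>k. wb (q k) s" "lub s q"
    using SEQ[OF s(1)] by blast
  obtain m where "nmul n x' \<le> nmul (Suc n) (q m)"
    using wbD[OF w incseq_nmul_comp[OF q(2)] lub_nmul[OF q(2,4)]] by blast
  then show ?thesis using q s by blast
qed

end


lemma ratio_le:
  fixes A B :: ennreal
  assumes h: "\<And>n. n \<ge> 1 \<Longrightarrow> of_nat n * A \<le> of_nat (Suc n) * B"
  shows "A \<le> B"
proof (cases "B = top")
  case True then show ?thesis by simp
next
  case False
  then obtain b where b: "B = ennreal b" "b \<ge> 0" by (cases B) auto
  have "A \<le> 2 * B" using h[of 1] by simp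
  moreover have "2 * B \<noteq> top" using False by (simp add: ennreal_mult_eq_top_iff)
  ultimately have "A \<noteq> top" using top_unique by fastforce
  then obtain a where a: "A = ennreal a" "a \<ge> 0" by (cases A) auto
  have r: "real n * a \<le> real (Suc n) * b" if "n \<ge> 1" for n
  proof -
    have "ennreal (real n * a) \<le> ennreal (real (Suc n) * b)"
      using h[OF that] a b by (simp add: ennreal_mult' ennreal_of_nat_eq_real_of_nat)
    then show ?thesis using b by (simp add: ennreal_le_iff)
  qed
  show ?thesis
  proof (rule ccontr)
    assume "\<not> A \<le> B"
    then have ab: "a > b" using a b by (simp add: ennreal_le_iff2 not_le)
    obtain n :: nat where n: "real n > b / (a - b)" using reals_Archimedean2 by blast
    define m where "m = max n 1"
    have m1: "m \<ge> 1" by (simp add: m_def)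
    have "real m > b / (a - b)" using n by (simp add: m_def)
    then have "real m * (a - b) > b" using ab by (simp add: field_simps)
    then have "real m * a > real (Suc m) * b" by (simp add: algebra_simps)
    then show False using r[OF m1] by simp
  qed
qed

lemma fun_props:
  fixes T :: "'a::ordered_comm_monoid_add set"
  assumes "\<mu> \<in> functionals T"
  shows "\<And>x. x \<notin> T \<Longrightarrow> \<mu> x = 0" "\<mu> 0 = 0"
    "\<And>x y. x \<in> T \<Longrightarrow> y \<in> T \<Longrightarrow> \<mu> (x + y) = \<mu> x + \<mu> y"
    "\<And>x y. x \<in> T \<Longrightarrow> y \<in> T \<Longrightarrow> x \<le> y \<Longrightarrow> \<mu> x \<le> \<mu> y"
    "\<And>z s. (\<forall>n. z n \<in> T) \<Longrightarrow> incseq z \<Longrightarrow> is_lub T s z \<Longrightarrow> \<mu> s = (SUP n. \<mu> (z n))"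
  using assms unfolding functionals_def by auto

lemma fun_nmul:
  fixes T :: "'a::ordered_comm_monoid_add set"
  assumes f: "\<mu> \<in> functionals T" and T0: "0 \<in> T" and Tadd: "\<And>x y. x \<in> T \<Longrightarrow> y \<in> T \<Longrightarrow> x + y \<in> T"
    and a: "a \<in> T"
  shows "nmul n a \<in> T \<and> \<mu> (nmul n a) = of_nat n * \<mu> a"
proof (induction n)
  case 0 then show ?case using fun_props(2)[OF f] T0 by simp
next
  case (Suc n)
  then have na: "nmul n a \<in> T" by blast
  show ?case using Suc fun_props(3)[OF f a na] Tadd[OF a na] by (simp add: algebra_simps)
qed

lemma fun_ineq:
  fixes T :: "'a::ordered_comm_monoid_add set"
  assumes f: "\<mu> \<in> functionals T" and T0: "0 \<in> T" and Tadd: "\<And>x y. x \<in> T \<Longrightarrow> y \<in> T \<Longrightarrow> x + y \<in> T"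
    and a: "a \<in> T" and b: "b \<in> T" and le: "nmul n a \<le> nmul (Suc n) b"
  shows "of_nat n * \<mu> a \<le> of_nat (Suc n) * \<mu> b"
  using fun_props(4)[OF f _ _ le] fun_nmul[OF f T0 Tadd a, of n] fun_nmul[OF f T0 Tadd b, of "Suc n"]
  by metis

context CuS begin

definition R :: "('a \<Rightarrow> ennreal) \<Rightarrow> ('a \<Rightarrow> ennreal)" where
  "R \<mu> = (\<lambda>x. if x \<in> soft_set then \<mu> x else 0)"

definition E :: "('a \<Rightarrow> ennreal) \<Rightarrow> ('a \<Rightarrow> ennreal)" where
  "E \<rho> = (\<lambda>x. SUP s\<in>{s. strongly_soft s \<and> s \<le> x}. \<rho> s)"

lemma E_apply: "E \<rho> x = (SUP s\<in>{s. strongly_soft s \<and> s \<le> x}. \<rho> s)"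
  by (simp add: E_def)

lemma soft_set_iff: "x \<in> soft_set \<longleftrightarrow> strongly_soft x" by (simp add: soft_set_def)

lemma soft_closed: "(0::'a) \<in> soft_set" "\<And>(x::'a) y. x \<in> soft_set \<Longrightarrow> y \<in> soft_set \<Longrightarrow> x + y \<in> soft_set"
  by (auto simp: soft_set_iff soft0 soft_add)

lemma UNIV_closed: "(0::'a) \<in> UNIV" "\<And>(x::'a) y. x \<in> UNIV \<Longrightarrow> y \<in> UNIV \<Longrightarrow> x + y \<in> UNIV" by auto

lemma R_fun:
  assumes f: "\<mu> \<in> functionals UNIV"
  shows "R \<mu> \<in> functionals soft_set"
  unfolding functionals_def mem_Collect_eq
proof (intro conjI allI ballI impI)
  show "R \<mu> 0 = 0" using fun_props(2)[OF f] soft_closed by (simp add: R_def)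
next
  fix x y :: 'a assume "x \<in> soft_set" "y \<in> soft_set"
  then show "R \<mu> (x + y) = R \<mu> x + R \<mu> y" using fun_props(3)[OF f] soft_closed by (simp add: R_def)
next
  fix x y :: 'a assume "x \<in> soft_set" "y \<in> soft_set" "x \<le> y"
  then show "R \<mu> x \<le> R \<mu> y" using fun_props(4)[OF f] by (simp add: R_def)
next
  fix z and s :: 'a assume h: "(\<forall>n. z n \<in> soft_set) \<and> incseq z \<and> is_lub soft_set s z"
  then have "lub s z" using lub_soft_iff by blast
  moreover have "s \<in> soft_set" using h unfolding is_lub_def by auto
  ultimately show "R \<mu> s = (SUP n. R \<mu> (z n))" using fun_props(5)[OF f, of z s] h by (simp add: R_def)
qed (simp add: R_def)

lemma soft_fun_sup:
  assumes f: "\<rho> \<in> functionals soft_set" and q: "\<forall>k. strongly_soft (q k)" "incseq q" "lub s q"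
  shows "\<rho> s = (SUP k. \<rho> (q k))"
  using fun_props(5)[OF f, of q s] lub_soft_iff[OF q(2)] q by (simp add: soft_set_iff)

lemma E_R:
  assumes f: "\<mu> \<in> functionals UNIV"
  shows "E (R \<mu>) = \<mu>"
proof
  fix x
  have ER: "E (R \<mu>) x = (SUP s\<in>{s. strongly_soft s \<and> s \<le> x}. \<mu> s)"
    unfolding E_def R_def by (intro SUP_cong) (auto simp: soft_set_iff)
  have le: "E (R \<mu>) x \<le> \<mu> x" unfolding ER by (rule SUP_least) (use fun_props(4)[OF f] in auto)
  obtain z where z: "\<forall>n. wb (z n) (z (Suc n))" "lub x z" using O2 by blast
  have "\<mu> x = (SUP k. \<mu> (z k))" using fun_props(5)[OF f, of z x] z wbseq_inc by blast
  also have "\<dots> \<le> E (R \<mu>) x"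
  proof (rule SUP_least)
    fix k
    show "\<mu> (z k) \<le> E (R \<mu>) x"
    proof (rule ratio_le)
      fix n :: nat
      obtain s where s: "strongly_soft s" "s \<le> x" "nmul n (z k) \<le> nmul (Suc n) s"
        using K[OF wbseq_wb[OF z]] by blast
      have "of_nat n * \<mu> (z k) \<le> of_nat (Suc n) * \<mu> s" using fun_ineq[OF f _ _ _ _ s(3)] by simp
      also have "\<mu> s \<le> E (R \<mu>) x" unfolding ER by (rule SUP_upper) (use s in auto)
      then have "of_nat (Suc n) * \<mu> s \<le> of_nat (Suc n) * E (R \<mu>) x" by (rule mult_left_mono) simp
      finally show "of_nat n * \<mu> (z k) \<le> of_nat (Suc n) * E (R \<mu>) x" .
    qed
  qed
  finally show "E (R \<mu>) x = \<mu> x" using le by (rule antisym[rotated])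
qed

lemma E_soft:
  assumes f: "\<rho> \<in> functionals soft_set" and x: "strongly_soft x"
  shows "E \<rho> x = \<rho> x"
proof (rule antisym)
  show "E \<rho> x \<le> \<rho> x" unfolding E_def
    by (rule SUP_least) (use fun_props(4)[OF f] x in \<open>auto simp: soft_set_iff\<close>)
  show "\<rho> x \<le> E \<rho> x" unfolding E_def by (rule SUP_upper) (use x in auto)
qed

lemma E_mono: "x \<le> y \<Longrightarrow> E \<rho> x \<le> E \<rho> y"
  unfolding E_def by (rule SUP_subset_mono) (auto intro: order_trans)

lemma E_upper: "strongly_soft s \<Longrightarrow> s \<le> x \<Longrightarrow> \<rho> s \<le> E \<rho> x"
  unfolding E_def by (rule SUP_upper) auto

lemma E_fun:
  assumes f: "\<rho> \<in> functionals soft_set"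
  shows "E \<rho> \<in> functionals UNIV"
  unfolding functionals_def mem_Collect_eq
proof (intro conjI allI ballI impI)
  have "{s. strongly_soft s \<and> s \<le> (0::'a)} = {0}" using soft0 pos antisym by blast
  then show "E \<rho> 0 = 0" using fun_props(2)[OF f] by (simp add: E_def)
next
  fix x y :: 'a
  show "E \<rho> (x + y) = E \<rho> x + E \<rho> y"
  proof (rule antisym)
    show "E \<rho> (x + y) \<le> E \<rho> x + E \<rho> y"
      unfolding E_apply[of \<rho> "x+y"]
    proof (rule SUP_least)
      fix s assume "s \<in> {s. strongly_soft s \<and> s \<le> x + y}"
      then have s: "strongly_soft s" "s \<le> x + y" by auto
      obtain q where q: "\<forall>k. strongly_soft (q k)" "incseq q" "\<forall>k. wb (q k) s" "lub s q"
        using SEQ[OF s(1)] by blast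
      have "\<rho> s = (SUP k. \<rho> (q k))" using soft_fun_sup[OF f q(1,2,4)] .
      also have "\<dots> \<le> E \<rho> x + E \<rho> y"
      proof (rule SUP_least)
        fix k
        have "wb (q k) (x + y)" using q(3) s(2) wb_le_trans by blast
        then obtain x0 y0 where xy: "wb x0 x" "wb y0 y" "q k \<le> x0 + y0" using W5 by blast
        show "\<rho> (q k) \<le> E \<rho> x + E \<rho> y"
        proof (rule ratio_le)
          fix n :: nat
          obtain sx where sx: "strongly_soft sx" "sx \<le> x" "nmul n x0 \<le> nmul (Suc n) sx"
            using K[OF xy(1)] by blast
          obtain sy where sy: "strongly_soft sy" "sy \<le> y" "nmul n y0 \<le> nmul (Suc n) sy"
            using K[OF xy(2)] by blast
          have "nmul n (q k) \<le> nmul n x0 + nmul n y0" using nmul_mono[OF xy(3)] by (simp add: nmul_distrib)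
          also have "\<dots> \<le> nmul (Suc n) sx + nmul (Suc n) sy" using sx(3) sy(3) by (rule add_mono)
          finally have "nmul n (q k) \<le> nmul (Suc n) (sx + sy)" by (simp add: nmul_distrib)
          then have "of_nat n * \<rho> (q k) \<le> of_nat (Suc n) * \<rho> (sx + sy)"
            using fun_ineq[OF f soft_closed] q(1) sx(1) sy(1) soft_add by (simp add: soft_set_iff)
          also have "\<rho> (sx + sy) = \<rho> sx + \<rho> sy" using fun_props(3)[OF f] sx(1) sy(1) by (simp add: soft_set_iff)
          also have "\<rho> sx + \<rho> sy \<le> E \<rho> x + E \<rho> y" using E_upper sx sy by (intro add_mono) auto
          then have "of_nat (Suc n) * (\<rho> sx + \<rho> sy) \<le> of_nat (Suc n) * (E \<rho> x + E \<rho> y)"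
            by (rule mult_left_mono) simp
          finally show "of_nat n * \<rho> (q k) \<le> of_nat (Suc n) * (E \<rho> x + E \<rho> y)" .
        qed
      qed
      finally show "\<rho> s \<le> E \<rho> x + E \<rho> y" .
    qed
  next
    have ne: "{s. strongly_soft s \<and> s \<le> (w::'a)} \<noteq> {}" for w using soft0 pos by blast
    have "E \<rho> x + E \<rho> y = (SUP a\<in>{s. strongly_soft s \<and> s \<le> x}. \<rho> a + E \<rho> y)"
      unfolding E_apply[of \<rho> x] by (rule ennreal_SUP_add_left[symmetric]) (rule ne)
    also have "\<dots> \<le> E \<rho> (x + y)"
    proof (rule SUP_least)
      fix a assume a: "a \<in> {s. strongly_soft s \<and> s \<le> x}"
      have "\<rho> a + E \<rho> y = (SUP b\<in>{s. strongly_soft s \<and> s \<le> y}. \<rho> a + \<rho> b)"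
        unfolding E_apply[of \<rho> y] by (rule ennreal_SUP_add_right) (rule ne)
      also have "\<dots> \<le> E \<rho> (x + y)"
      proof (rule SUP_least)
        fix b assume b: "b \<in> {s. strongly_soft s \<and> s \<le> y}"
        have "\<rho> a + \<rho> b = \<rho> (a + b)" using fun_props(3)[OF f] a b by (simp add: soft_set_iff)
        also have "\<dots> \<le> E \<rho> (x + y)" using a b by (intro E_upper soft_add add_mono) auto
        finally show "\<rho> a + \<rho> b \<le> E \<rho> (x + y)" .
      qed
      finally show "\<rho> a + E \<rho> y \<le> E \<rho> (x + y)" .
    qed
    finally show "E \<rho> x + E \<rho> y \<le> E \<rho> (x + y)" .
  qed
next
  fix x y :: 'a assume "x \<le> y" then show "E \<rho> x \<le> E \<rho> y" by (rule E_mono)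
next
  fix z and L :: 'a assume h: "(\<forall>n. z n \<in> UNIV) \<and> incseq z \<and> lub L z"
  show "E \<rho> L = (SUP n. E \<rho> (z n))"
  proof (rule antisym)
    show "(SUP n. E \<rho> (z n)) \<le> E \<rho> L" by (rule SUP_least) (use h lub_upper E_mono in blast)
    show "E \<rho> L \<le> (SUP n. E \<rho> (z n))"
      unfolding E_apply[of \<rho> L]
    proof (rule SUP_least)
      fix s assume "s \<in> {s. strongly_soft s \<and> s \<le> L}"
      then have s: "strongly_soft s" "s \<le> L" by auto
      obtain q where q: "\<forall>k. strongly_soft (q k)" "incseq q" "\<forall>k. wb (q k) s" "lub s q"
        using SEQ[OF s(1)] by blast
      have "\<rho> s = (SUP k. \<rho> (q k))" using soft_fun_sup[OF f q(1,2,4)] .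
      also have "\<dots> \<le> (SUP n. E \<rho> (z n))"
      proof (rule SUP_least)
        fix k
        obtain m where "q k \<le> z m" using wbD[OF q(3)[rule_format, of k]] h s(2) by blast
        then have "\<rho> (q k) \<le> E \<rho> (z m)" using q(1) by (intro E_upper) auto
        also have "\<dots> \<le> (SUP n. E \<rho> (z n))" by (rule SUP_upper) simp
        finally show "\<rho> (q k) \<le> (SUP n. E \<rho> (z n))" .
      qed
      finally show "\<rho> s \<le> (SUP n. E \<rho> (z n))" .
    qed
  qed
qed simp

lemma R_E:
  assumes f: "\<rho> \<in> functionals soft_set"
  shows "R (E \<rho>) = \<rho>"
proof
  fix x show "R (E \<rho>) x = \<rho> x"
    using E_soft[OF f] fun_props(1)[OF f] by (auto simp: R_def soft_set_iff)
qed

end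


lemma Limsup_filtermap_le': "Limsup (filtermap f F) g \<le> Limsup F (\<lambda>x. g (f x))"
proof -
  have "Limsup (filtermap f F) g \<le> (SUP x\<in>Collect P. g (f x))" if "eventually P F" for P
  proof -
    have ev: "eventually (\<lambda>y. y \<in> f ` Collect P) (filtermap f F)"
      using that by (auto simp: eventually_filtermap elim: eventually_mono)
    have "Limsup (filtermap f F) g \<le> (SUP y\<in>Collect (\<lambda>y. y \<in> f ` Collect P). g y)"
      unfolding Limsup_def by (rule INF_lower) (use ev in simp)
    also have "\<dots> = (SUP x\<in>Collect P. g (f x))" by (simp add: image_comp)
    finally show ?thesis .
  qed
  then have "Limsup (filtermap f F) g \<le> (INF P\<in>{P. eventually P F}. SUP x\<in>Collect P. g (f x))"
    by (intro INF_greatest) auto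
  also have "\<dots> = Limsup F (\<lambda>x. g (f x))" by (simp add: Limsup_def)
  finally show ?thesis .
qed

lemma Liminf_filtermap_ge': "Liminf F (\<lambda>x. g (f x)) \<le> Liminf (filtermap f F) g"
proof -
  have "(INF x\<in>Collect P. g (f x)) \<le> Liminf (filtermap f F) g" if "eventually P F" for P
  proof -
    have ev: "eventually (\<lambda>y. y \<in> f ` Collect P) (filtermap f F)"
      using that by (auto simp: eventually_filtermap elim: eventually_mono)
    have "(INF x\<in>Collect P. g (f x)) = (INF y\<in>Collect (\<lambda>y. y \<in> f ` Collect P). g y)"
      by (simp add: image_comp)
    also have "\<dots> \<le> Liminf (filtermap f F) g"
      unfolding Liminf_def by (rule SUP_upper) (use ev in simp)
    finally show ?thesis .
  qed
  then have "(SUP P\<in>{P. eventually P F}. INF x\<in>Collect P. g (f x)) \<le> Liminf (filtermap f F) g"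
    by (intro SUP_least) auto
  moreover have "(SUP P\<in>{P. eventually P F}. INF x\<in>Collect P. g (f x)) = Liminf F (\<lambda>x. g (f x))"
    by (simp add: Liminf_def)
  ultimately show ?thesis by simp
qed

lemma Limsup_cmult:
  fixes c :: ennreal
  assumes c: "c < top"
  shows "Limsup F (\<lambda>x. c * h x) = c * Limsup F h"
proof (cases "F = bot")
  case True then show ?thesis by (simp add: bot_ennreal)
next
  case False
  have "continuous_on UNIV (\<lambda>y::ennreal. c * y)"
    using ennreal_continuous_on_cmult[OF c continuous_on_id] by simp
  moreover have "mono (\<lambda>y::ennreal. c * y)" by (auto simp: mono_def mult_left_mono)
  ultimately show ?thesis using Limsup_compose_continuous_mono[OF _ _ False] by blast
qed

lemma openin_F: "openin (F_topology T) = F_open T"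
  unfolding F_topology_def using topology_inverse'[OF istopology_F_open] .

lemma topspace_F: "topspace (F_topology T) = functionals T"
proof -
  have "F_open T (functionals T)" unfolding F_open_def by auto
  moreover have "F_open T U \<Longrightarrow> U \<subseteq> functionals T" for U unfolding F_open_def by auto
  ultimately show ?thesis unfolding topspace_def openin_F by blast
qed

context CuS begin

lemma R_cont: "continuous_map (F_topology UNIV) (F_topology soft_set) R"
  unfolding continuous_map_def topspace_F openin_F
proof (intro conjI allI impI)
  show "R \<in> functionals UNIV \<rightarrow> functionals soft_set" using R_fun by blast
next
  fix U :: "('a \<Rightarrow> ennreal) set" assume U: "F_open soft_set U"
  show "F_open UNIV {x \<in> functionals UNIV. R x \<in> U}"
    unfolding F_open_def
  proof (intro conjI ballI allI impI)
    fix \<mu> :: "'a \<Rightarrow> ennreal" and F :: "('a \<Rightarrow> ennreal) filter" assume \<mu>: "\<mu> \<in> {x \<in> functionals UNIV. R x \<in> U}"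
      and h: "eventually (\<lambda>\<nu>. \<nu> \<in> functionals UNIV) F \<and> F_conv UNIV F \<mu>"
    define G where "G = filtermap R F"
    have evG: "eventually (\<lambda>\<rho>. \<rho> \<in> functionals soft_set) G"
      unfolding G_def eventually_filtermap using h R_fun by (auto elim: eventually_mono)
    have convG: "F_conv soft_set G (R \<mu>)"
      unfolding F_conv_def
    proof (intro ballI impI conjI)
      fix x' x :: 'a assume x'x: "x' \<in> soft_set" "x \<in> soft_set" "way_below soft_set x' x"
      then have w: "wb x' x" using wb_soft_iff by (simp add: soft_set_iff)
      have "Limsup G (\<lambda>\<rho>. \<rho> x') \<le> Limsup F (\<lambda>\<nu>. R \<nu> x')" unfolding G_def by (rule Limsup_filtermap_le')
      also have "\<dots> = Limsup F (\<lambda>\<nu>. \<nu> x')" using x'x by (simp add: R_def)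
      also have "\<dots> \<le> \<mu> x" using h w unfolding F_conv_def by blast
      also have "\<dots> = R \<mu> x" using x'x by (simp add: R_def)
      finally show "Limsup G (\<lambda>\<rho>. \<rho> x') \<le> R \<mu> x" .
      have "R \<mu> x = \<mu> x" using x'x by (simp add: R_def)
      also have "\<dots> \<le> Liminf F (\<lambda>\<nu>. \<nu> x)" using h w unfolding F_conv_def by blast
      also have "\<dots> = Liminf F (\<lambda>\<nu>. R \<nu> x)" using x'x by (simp add: R_def)
      also have "\<dots> \<le> Liminf G (\<lambda>\<rho>. \<rho> x)" unfolding G_def by (rule Liminf_filtermap_ge')
      finally show "R \<mu> x \<le> Liminf G (\<lambda>\<rho>. \<rho> x)" .
    qed
    have Uc: "\<And>m H. m \<in> U \<Longrightarrow> eventually (\<lambda>\<nu>. \<nu> \<in> functionals soft_set) H \<Longrightarrow> F_conv soft_set H m \<Longrightarrow> eventually (\<lambda>\<nu>. \<nu> \<in> U) H"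
      using U unfolding F_open_def by blast
    have "eventually (\<lambda>\<rho>. \<rho> \<in> U) G" using Uc[OF _ evG convG] \<mu> by simp
    then have "eventually (\<lambda>\<nu>. R \<nu> \<in> U) F" unfolding G_def eventually_filtermap .
    then have "eventually (\<lambda>\<nu>. \<nu> \<in> functionals UNIV \<and> R \<nu> \<in> U) F"
      using h eventually_conj by blast
    then show "eventually (\<lambda>\<nu>. \<nu> \<in> {x \<in> functionals UNIV. R x \<in> U}) F"
      by (rule eventually_mono) simp
  qed auto
qed

lemma E_cont: "continuous_map (F_topology soft_set) (F_topology UNIV) E"
  unfolding continuous_map_def topspace_F openin_F
proof (intro conjI allI impI)
  show "E \<in> functionals soft_set \<rightarrow> functionals UNIV" using E_fun by blast
next
  fix U :: "('a \<Rightarrow> ennreal) set" assume U: "F_open UNIV U"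
  show "F_open soft_set {x \<in> functionals soft_set. E x \<in> U}"
    unfolding F_open_def
  proof (intro conjI ballI allI impI)
    fix \<rho> :: "'a \<Rightarrow> ennreal" and F :: "('a \<Rightarrow> ennreal) filter" assume \<rho>: "\<rho> \<in> {x \<in> functionals soft_set. E x \<in> U}"
      and h: "eventually (\<lambda>\<nu>. \<nu> \<in> functionals soft_set) F \<and> F_conv soft_set F \<rho>"
    have \<rho>f: "\<rho> \<in> functionals soft_set" using \<rho> by simp
    have Ef: "E \<rho> \<in> functionals UNIV" using E_fun[OF \<rho>f] .
    have hc: "Limsup F (\<lambda>\<nu>. \<nu> s') \<le> \<rho> s \<and> \<rho> s \<le> Liminf F (\<lambda>\<nu>. \<nu> s)"
      if "strongly_soft s'" "strongly_soft s" "wb s' s" for s' s :: 'a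
      using h that wb_soft_iff unfolding F_conv_def by (simp add: soft_set_iff)
    define G where "G = filtermap E F"
    have evG: "eventually (\<lambda>\<mu>. \<mu> \<in> functionals UNIV) G"
      unfolding G_def eventually_filtermap using h E_fun by (auto elim: eventually_mono)
    have convG: "F_conv UNIV G (E \<rho>)"
      unfolding F_conv_def
    proof (intro ballI impI conjI)
      fix x' x :: 'a assume "way_below UNIV x' x"
      then have w: "wb x' x" .
      have "Limsup F (\<lambda>\<nu>. E \<nu> x') \<le> E \<rho> x"
      proof (cases "F = bot")
        case True then show ?thesis by simp
      next
        case False
        show ?thesis
        proof (rule ratio_le)
          fix n :: nat
          obtain s' s where ss: "strongly_soft s'" "strongly_soft s" "wb s' s" "s \<le> x"
              "nmul n x' \<le> nmul (Suc n) s'" using K'[OF w] by blast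
          have ev: "eventually (\<lambda>\<nu>. of_nat n * E \<nu> x' \<le> of_nat (Suc n) * \<nu> s') F"
            using h
          proof (elim conjE eventually_mono)
            fix \<nu> :: "'a \<Rightarrow> ennreal" assume \<nu>: "\<nu> \<in> functionals soft_set"
            have "of_nat n * E \<nu> x' \<le> of_nat (Suc n) * E \<nu> s'"
              using fun_ineq[OF E_fun[OF \<nu>] UNIV_closed _ _ ss(5)] by simp
            then show "of_nat n * E \<nu> x' \<le> of_nat (Suc n) * \<nu> s'" using E_soft[OF \<nu> ss(1)] by simp
          qed
          have "of_nat n * Limsup F (\<lambda>\<nu>. E \<nu> x') = Limsup F (\<lambda>\<nu>. of_nat n * E \<nu> x')"
            by (rule Limsup_cmult[symmetric]) (simp add: of_nat_less_top)
          also have "\<dots> \<le> Limsup F (\<lambda>\<nu>. of_nat (Suc n) * \<nu> s')" by (rule Limsup_mono[OF ev])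
          also have "\<dots> = of_nat (Suc n) * Limsup F (\<lambda>\<nu>. \<nu> s')"
            by (rule Limsup_cmult) (simp add: of_nat_less_top)
          also have "\<dots> \<le> of_nat (Suc n) * E \<rho> x"
          proof (rule mult_left_mono)
            have "Limsup F (\<lambda>\<nu>. \<nu> s') \<le> \<rho> s" using hc[OF ss(1-3)] by blast
            also have "\<dots> \<le> E \<rho> x" using E_upper ss by blast
            finally show "Limsup F (\<lambda>\<nu>. \<nu> s') \<le> E \<rho> x" .
          qed simp
          finally show "of_nat n * Limsup F (\<lambda>\<nu>. E \<nu> x') \<le> of_nat (Suc n) * E \<rho> x" .
        qed
      qed
      then show "Limsup G (\<lambda>\<mu>. \<mu> x') \<le> E \<rho> x"
        unfolding G_def by (rule order_trans[OF Limsup_filtermap_le'[of E F "\<lambda>\<mu>. \<mu> x'"]])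
    next
      fix x' x :: 'a
      obtain z where z: "\<forall>n. wb (z n) (z (Suc n))" "lub x z" using O2 by blast
      have "E \<rho> x = (SUP k. E \<rho> (z k))" using fun_props(5)[OF Ef, of z x] z wbseq_inc by blast
      also have "\<dots> \<le> Liminf F (\<lambda>\<nu>. E \<nu> x)"
      proof (rule SUP_least)
        fix k
        show "E \<rho> (z k) \<le> Liminf F (\<lambda>\<nu>. E \<nu> x)"
        proof (rule ratio_le)
          fix n :: nat
          obtain s' s where ss: "strongly_soft s'" "strongly_soft s" "wb s' s" "s \<le> x"
              "nmul n (z k) \<le> nmul (Suc n) s'" using K'[OF wbseq_wb[OF z]] by blast
          have "of_nat n * E \<rho> (z k) \<le> of_nat (Suc n) * E \<rho> s'"
            using fun_ineq[OF Ef UNIV_closed _ _ ss(5)] by simp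
          also have "E \<rho> s' = \<rho> s'" using E_soft[OF \<rho>f ss(1)] .
          also have "of_nat (Suc n) * \<rho> s' \<le> of_nat (Suc n) * Liminf F (\<lambda>\<nu>. E \<nu> x)"
          proof (rule mult_left_mono)
            have "\<rho> s' \<le> \<rho> s" using fun_props(4)[OF \<rho>f] ss wb_le by (simp add: soft_set_iff)
            also have "\<dots> \<le> Liminf F (\<lambda>\<nu>. \<nu> s)" using hc[OF ss(1-3)] by blast
            also have "\<dots> \<le> Liminf F (\<lambda>\<nu>. E \<nu> x)"
              using h
            proof (intro Liminf_mono, elim conjE eventually_mono)
              fix \<nu> :: "'a \<Rightarrow> ennreal" assume \<nu>: "\<nu> \<in> functionals soft_set"
              show "\<nu> s \<le> E \<nu> x" using E_soft[OF \<nu> ss(2)] E_mono[OF ss(4), of \<nu>] by simp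
            qed
            finally show "\<rho> s' \<le> Liminf F (\<lambda>\<nu>. E \<nu> x)" .
          qed simp
          finally show "of_nat n * E \<rho> (z k) \<le> of_nat (Suc n) * Liminf F (\<lambda>\<nu>. E \<nu> x)" .
        qed
      qed
      finally show "E \<rho> x \<le> Liminf G (\<lambda>\<mu>. \<mu> x)"
        unfolding G_def by (rule order_trans[OF _ Liminf_filtermap_ge'[of F "\<lambda>\<mu>. \<mu> x" E]])
    qed
    have Uc: "\<And>m H. m \<in> U \<Longrightarrow> eventually (\<lambda>\<nu>. \<nu> \<in> functionals UNIV) H \<Longrightarrow> F_conv UNIV H m \<Longrightarrow> eventually (\<lambda>\<nu>. \<nu> \<in> U) H"
      using U unfolding F_open_def by blast
    have "eventually (\<lambda>\<mu>. \<mu> \<in> U) G" using Uc[OF _ evG convG] \<rho> by simp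
    then have "eventually (\<lambda>\<nu>. E \<nu> \<in> U) F" unfolding G_def eventually_filtermap .
    then have "eventually (\<lambda>\<nu>. \<nu> \<in> functionals soft_set \<and> E \<nu> \<in> U) F"
      using h eventually_conj by blast
    then show "eventually (\<lambda>\<nu>. \<nu> \<in> {x \<in> functionals soft_set. E x \<in> U}) F"
      by (rule eventually_mono) simp
  qed auto
qed

lemma main: "homeomorphic_map (F_topology UNIV) (F_topology soft_set) R"
  unfolding homeomorphic_map_maps homeomorphic_maps_def topspace_F
proof (intro exI conjI ballI)
  show "continuous_map (F_topology UNIV) (F_topology soft_set) R" by (rule R_cont)
  show "continuous_map (F_topology soft_set) (F_topology UNIV) E" by (rule E_cont)
  fix \<mu> :: "'a \<Rightarrow> ennreal" assume "\<mu> \<in> functionals UNIV" then show "E (R \<mu>) = \<mu>" by (rule E_R)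
next
  fix \<rho> :: "'a \<Rightarrow> ennreal" assume "\<rho> \<in> functionals soft_set" then show "R (E \<rho>) = \<rho>" by (rule R_E)
qed

end

theorem theorem5p14:
  fixes S_ty :: "'a::ordered_comm_monoid_add itself"
  assumes "Cu_semigroup (UNIV :: 'a set)"
    and "O5 (UNIV :: 'a set)" and "O6 (UNIV :: 'a set)" and "O7 (UNIV :: 'a set)"
    and "two_omega_divisible (UNIV :: 'a set)"
  shows "homeomorphic_map (F_topology (UNIV :: 'a set)) (F_topology (soft_set :: 'a set))
           (\<lambda>\<mu> x. if x \<in> soft_set then \<mu> x else 0)"
proof -
  interpret CuS S_ty using assms by (unfold_locales) auto
  show ?thesis using main unfolding R_def[abs_def] .
qed


end
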